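(* Let $p$ be an odd prime and $r$ an integer with $p \nmid r$. Let $$f_{r,p}(x) = \frac{1}{2\sqrt{2}}\left((1+\sqrt{2})^r (x+\sqrt{2})^p - (1-\sqrt{2})^r (x - \sqrt{2})^p\right) \in \mathbb{Z}[x].$$ Then $f_{r,p}$ has $p$ distinct roots $\rho_0, \dots, \rho_{p-1}$ given by $$\rho_i = \sqrt{2} + \frac{2\sqrt{2}}{(-1)^r (1+\sqrt{2})^{-2r/p} \zeta_p^i - 1}, \quad 0 \leq i \leq p-1,$$ where $\zeta_p = e^{2\pi i/p}$ and $(1+\sqrt{2})^{-2r/p}$ denotes the positive real value. The only real root is $\rho_0$. *)

theory Defs
  imports "HOL-Analysis.Analysis" "HOL-Computational_Algebra.Polynomial"
begin

definition frp :: "int \<Rightarrow> nat \<Rightarrow> complex poly" where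
  "frp r p = smult (1 / (2 * complex_of_real (sqrt 2)))
     (smult (complex_of_real ((1 + sqrt 2) powi r)) ([:complex_of_real (sqrt 2), 1:] ^ p)
    - smult (complex_of_real ((1 - sqrt 2) powi r)) ([:- complex_of_real (sqrt 2), 1:] ^ p))"

definition zeta :: "nat \<Rightarrow> complex" where
  "zeta p = exp (2 * complex_of_real pi * \<i> / of_nat p)"

definition rho :: "int \<Rightarrow> nat \<Rightarrow> nat \<Rightarrow> complex" where
  "rho r p i = complex_of_real (sqrt 2) + 2 * complex_of_real (sqrt 2) /
     ((-1) powi r * complex_of_real ((1 + sqrt 2) powr (- 2 * of_int r / of_nat p)) * zeta p ^ i - 1)"

end

theory Submission
  imports Defs
begin

definition cp :: "real \<Rightarrow> real \<Rightarrow> bool" where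
  "cp x y \<longleftrightarrow> (\<exists>u::int. \<exists>v::int. x = of_int u + of_int v * sqrt 2 \<and> y = of_int u - of_int v * sqrt 2)"

lemma cp_mult: assumes "cp x y" "cp x2 y2" shows "cp (x*x2) (y*y2)"
proof -
  obtain u v u2 v2 :: int where h: "x = u + v * sqrt 2" "y = u - v * sqrt 2"
     "x2 = u2 + v2 * sqrt 2" "y2 = u2 - v2 * sqrt 2" using assms unfolding cp_def by blast
  have s: "sqrt 2 * sqrt 2 = (2::real)" by simp
  show ?thesis unfolding cp_def
    apply (rule exI[of _ "u * u2 + 2 * v * v2"], rule exI[of _ "u * v2 + v * u2"])
    unfolding h by (simp add: algebra_simps s)
qed

lemma cp_pow: "cp x y \<Longrightarrow> cp (x^n) (y^n)"
proof (induction n)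
  case 0 show ?case unfolding cp_def by (rule exI[of _ 1], rule exI[of _ 0]) simp
next
  case (Suc n) then show ?case using cp_mult[of x y "x^n" "y^n"] by simp
qed

lemma cp_powi: "cp ((1 + sqrt 2) powi r) ((1 - sqrt 2) powi r)"
proof (cases r rule: int_cases4)
  case (nonneg n)
  have "cp (1 + sqrt 2) (1 - sqrt 2)" unfolding cp_def by (auto intro!: exI[of _ 1])
  then show ?thesis using cp_pow nonneg by simp
next
  case (neg n)
  have a: "inverse (1 + sqrt 2) = sqrt 2 - 1"
    by (rule inverse_unique) (simp add: algebra_simps)
  have b: "inverse (1 - sqrt 2) = - 1 - sqrt 2"
    by (rule inverse_unique) (simp add: algebra_simps)
  have "cp (sqrt 2 - 1) (- 1 - sqrt 2)" unfolding cp_def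
    by (rule exI[of _ "-1"], rule exI[of _ 1]) simp
  then show ?thesis using cp_pow neg by (simp add: power_int_minus a b flip: power_inverse)
qed

lemma cp_sqrt: "cp (sqrt 2 ^ m) ((- sqrt 2) ^ m)"
proof -
  have "cp (sqrt 2) (- sqrt 2)" unfolding cp_def by (rule exI[of _ 0], rule exI[of _ 1]) simp
  then show ?thesis by (rule cp_pow)
qed

lemma cp_diff: "cp x y \<Longrightarrow> \<exists>k::int. x - y = 2 * sqrt 2 * k"
  unfolding cp_def by auto

lemma zeta_pow: "zeta p ^ j = exp(2 * of_real pi * \<i> * of_nat j / of_nat p)"
  unfolding zeta_def by (simp add: exp_of_nat_mult[symmetric] field_simps)

lemma powr_int_real: "(x::real) > 0 \<Longrightarrow> x powr (of_int n) = x powi n"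
  by (cases n rule: int_cases4) (auto simp: powr_realpow powr_minus power_int_minus)

lemma mob1:
  fixes S w z :: complex
  assumes "S \<noteq> 0" "w \<noteq> 1" "z = S + 2 * S/(w-1)"
  shows "z - S \<noteq> 0" "z + S = w * (z - S)"
proof -
  have w1: "w - 1 \<noteq> 0" using assms by simp
  show "z - S \<noteq> 0" using assms w1 by simp
  show "z + S = w * (z - S)" using assms(1,3) w1 by (simp add: field_simps)
qed

lemma mob2:
  fixes S z :: complex
  assumes "S \<noteq> 0" "z \<noteq> S"
  shows "(z+S)/(z-S) \<noteq> 1" "z = S + 2 * S/((z+S)/(z-S)-1)"
proof -
  have d: "z - S \<noteq> 0" using assms by simp
  show "(z+S)/(z-S) \<noteq> 1" using d assms(1) by (simp add: field_simps)
  have "(z+S)/(z-S) - 1 = 2 * S/(z-S)" using d by (simp add: field_simps)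
  then show "z = S + 2 * S/((z+S)/(z-S)-1)" using d assms(1) by simp
qed

lemma neg1_powi_pow: "odd p \<Longrightarrow> ((-1::real) powi r)^p = (-1) powi r"
proof (cases r rule: int_cases4)
  case (nonneg n)
  assume "odd p"
  then show ?thesis using nonneg by (simp add: power_mult[symmetric] mult.commute[of n] power_mult)
next
  case (neg n)
  assume "odd p"
  then show ?thesis using neg
    by (simp add: power_int_minus power_mult[symmetric] mult.commute[of n] power_mult flip: power_inverse)
qed

theorem theorem4p1:
  fixes p :: nat and r :: int
  assumes "prime p" and "odd p" and "\<not> int p dvd r"
  shows "(\<forall>n. coeff (frp r p) n \<in> \<int>)
    \<and> frp r p \<noteq> 0
    \<and> {z. poly (frp r p) z = 0} = rho r p ` {0..<p}
    \<and> inj_on (rho r p) {0..<p}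
    \<and> (\<forall>i<p. rho r p i \<in> \<real> \<longleftrightarrow> i = 0)"
proof -
  define s where "s = sqrt 2"
  define A where "A = (1 + s) powi r"
  define B where "B = (1 - s) powi r"
  define S where "S = complex_of_real s"
  have s0: "s > 0" unfolding s_def by simp
  have S0: "S \<noteq> 0" using s0 unfolding S_def by simp
  have r0: "r \<noteq> 0" using assms(3) by auto
  have p1: "p \<ge> 1" using assms(2) by (cases p) auto
  have A0: "A > 0" unfolding A_def using s0 by simp
  have coeff_frp: "coeff (frp r p) n = (if n \<le> p then complex_of_real (of_nat (p choose n) * (A * s^(p-n) - B * (-s)^(p-n)) / (2 * s)) else 0)" for n
    unfolding frp_def A_def B_def s_def
    by (auto simp: coeff_linear_poly_power coeff_eq_0 degree_linear_power algebra_simps diff_divide_distrib)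
  have P1: "\<forall>n. coeff (frp r p) n \<in> \<int>"
  proof
    fix n
    show "coeff (frp r p) n \<in> \<int>"
    proof (cases "n \<le> p")
      case True
      have cpn: "cp (A * s^(p-n)) (B * (-s)^(p-n))"
        unfolding A_def B_def s_def by (intro cp_mult cp_powi cp_sqrt)
      then obtain k :: int where k: "A * s^(p-n) - B * (-s)^(p-n) = 2 * s * k"
        using cp_diff[OF cpn] unfolding s_def by blast
      have "coeff (frp r p) n = of_int (int (p choose n) * k)"
        using True s0 by (simp add: coeff_frp k)
      then show ?thesis by simp
    qed (simp add: coeff_frp)
  qed
  have poly_frp: "poly (frp r p) z = (of_real A * (z+S)^p - of_real B * (z-S)^p) / (2 * S)" for z
    unfolding frp_def A_def B_def S_def s_def by (simp add: algebra_simps diff_divide_distrib)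
  have root_iff: "poly (frp r p) z = 0 \<longleftrightarrow> of_real A * (z+S)^p = of_real B * (z-S)^p" for z
    using S0 by (simp add: poly_frp)
  define c where "c = (-1) powi r * (1 + s) powr (- 2 * of_int r / of_nat p)"
  have s1: "1 + s > 1" using s0 by simp
  have cpA: "c^p * A = B"
  proof -
    have "((1 + s) powr (- 2 * of_int r / of_nat p))^p = (1 + s) powr (of_nat p * (- 2 * of_int r / of_nat p))"
      using s0 by (intro powr_power) simp
    also have "\<dots> = (1 + s) powr (of_int (-2 * r))" using p1 by simp
    also have "\<dots> = (1 + s) powi (-2 * r)" using s0 by (intro powr_int_real) simp
    finally have e1: "((1 + s) powr (- 2 * of_int r / of_nat p))^p = (1 + s) powi (-2 * r)" .
    have "c^p = (-1) powi r * (1 + s) powi (-2 * r)"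
      unfolding c_def power_mult_distrib e1 neg1_powi_pow[OF assms(2)] ..
    then have "c^p * A = (-1) powi r * ((1 + s) powi (-2 * r) * (1 + s) powi r)"
      unfolding A_def by simp
    also have "(1 + s) powi (-2 * r) * (1 + s) powi r = (1 + s) powi (- r)"
      using s0 by (simp flip: power_int_add)
    also have "(-1) powi r * (1 + s) powi (- r) = ((-1) * inverse (1 + s)) powi r"
      by (metis mult_minus1 power_int_mult_distrib power_int_inverse power_int_minus)
    also have "(-1) * inverse (1 + s) = 1 - s"
    proof -
      have "inverse (1 + s) = s - 1" by (rule inverse_unique) (simp add: s_def algebra_simps)
      then show ?thesis by simp
    qed
    finally show ?thesis unfolding B_def .
  qed
  have c_abs: "\<bar>c\<bar> = (1 + s) powr (- 2 * of_int r / of_nat p)"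
    unfolding c_def using s0 by (simp add: abs_mult power_int_abs)
  have c_norm: "\<bar>c\<bar> \<noteq> 1" unfolding c_abs using s1 r0 p1 by simp
  have c0: "c \<noteq> 0" using c_abs s0 by auto
  define w where "w i = complex_of_real c * zeta p ^ i" for i
  have rho_eq: "rho r p i = S + 2 * S/(w i - 1)" for i
    unfolding rho_def w_def S_def c_def s_def by simp
  have zeta_p: "(zeta p ^ i) ^ p = 1" for i
  proof -
    have "zeta p ^ p = 1" unfolding zeta_pow using p1 by simp
    then show ?thesis by (simp flip: power_mult add: mult.commute[of i] power_mult)
  qed
  have norm_zeta: "norm (zeta p ^ i) = 1" for i unfolding zeta_pow by simp
  have w1: "w i \<noteq> 1" for i
  proof
    assume "w i = 1"
    then have "norm (w i) = 1" by simp
    then show False using c_norm unfolding w_def by (simp add: norm_mult norm_zeta)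
  qed
  have wp: "w i ^ p = of_real (c ^ p)" for i unfolding w_def by (simp add: power_mult_distrib zeta_p)
  have AB: "complex_of_real A * complex_of_real (c ^ p) = complex_of_real B"
    using cpA by (metis mult.commute of_real_mult of_real_power)
  have P3: "{z. poly (frp r p) z = 0} = rho r p ` {0..<p}"
  proof (intro equalityI subsetI)
    fix z assume "z \<in> {z. poly (frp r p) z = 0}"
    then have rt: "of_real A * (z+S)^p = of_real B * (z-S)^p" using root_iff by simp
    have zS: "z \<noteq> S"
    proof
      assume "z = S"
      have p0: "p > 0" using p1 by simp
      have "of_real A * (S + S)^p = of_real B * (S - S)^p" using rt unfolding \<open>z = S\<close> .
      then have "of_real A * (S + S)^p = 0" using p0 by simp
      moreover have "S + S \<noteq> 0" using S0 by simp
      ultimately show False using A0 by simp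
    qed
    define v where "v = (z+S)/(z-S)"
    have d: "z - S \<noteq> 0" using zS by simp
    have hz: "z + S = v * (z - S)" using d unfolding v_def by (simp add: field_simps)
    have e1: "(of_real A * v^p) * (z-S)^p = of_real B * (z-S)^p"
      using rt unfolding hz power_mult_distrib by (simp only: mult.assoc)
    have "(z-S)^p \<noteq> 0" using d by simp
    then have "of_real A * v^p = of_real B" using e1 by (rule mult_right_cancel[THEN iffD1])
    then have "of_real A * v^p = of_real A * of_real (c ^ p)" using AB by simp
    then have "v^p = of_real (c^p)" using A0 by simp
    then have "(v / of_real c)^p = 1" using c0 by (simp add: power_divide)
    then have "v / of_real c \<in> {exp(2 * of_real pi * \<i> * of_nat j / of_nat p) | j. j < p}"
      using complex_roots_unity[OF p1] by blast
    then obtain j where j: "j < p" "v / of_real c = exp(2 * of_real pi * \<i> * of_nat j / of_nat p)" by blast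
    then have "v = w j" unfolding w_def zeta_pow using c0 by (simp add: field_simps)
    then have vw: "v = w j" .
    have "z = S + 2 * S/(v-1)" using mob2(2)[OF S0 zS] unfolding v_def .
    also have "\<dots> = rho r p j" using vw rho_eq by simp
    finally have "z = rho r p j" .
    then show "z \<in> rho r p ` {0..<p}" using j by auto
  next
    fix z assume "z \<in> rho r p ` {0..<p}"
    then obtain i where z: "z = rho r p i" by auto
    have e: "z = S + 2 * S/(w i - 1)" using z rho_eq by simp
    have "z + S = w i * (z - S)" using mob1(2)[OF S0 w1 e] .
    then have "of_real A * (z+S)^p = (of_real A * w i ^p) * (z - S)^p" by (simp add: power_mult_distrib)
    also have "of_real A * w i ^ p = of_real B" using wp AB by simp
    finally show "z \<in> {z. poly (frp r p) z = 0}" using root_iff by simp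
  qed
  have P2: "frp r p \<noteq> 0"
  proof
    assume "frp r p = 0"
    then have "UNIV = rho r p ` {0..<p}" using P3 by auto
    then have "finite (UNIV :: complex set)" by (metis finite_atLeastLessThan finite_imageI)
    then show False using infinite_UNIV_char_0 by blast
  qed
  have wz: "w i = (rho r p i + S) / (rho r p i - S)" for i
  proof -
    have e: "rho r p i = S + 2 * S/(w i - 1)" using rho_eq by simp
    show ?thesis using mob1[OF S0 w1 e] by (simp add: field_simps)
  qed
  have P4: "inj_on (rho r p) {0..<p}"
  proof (rule inj_onI)
    fix i j assume ij: "i \<in> {0..<p}" "j \<in> {0..<p}" "rho r p i = rho r p j"
    then have "w i = w j" using wz[of i] wz[of j] by simp
    then have "zeta p ^ i = zeta p ^ j" using c0 unfolding w_def by simp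
    then have "i mod p = j mod p" unfolding zeta_pow using complex_root_unity_eq[OF p1] by blast
    then show "i = j" using ij by simp
  qed
  have SR: "S \<in> \<real>" unfolding S_def by simp
  have P5: "\<forall>i<p. rho r p i \<in> \<real> \<longleftrightarrow> i = 0"
  proof (intro allI impI iffI)
    fix i assume ip: "i < p" and R: "rho r p i \<in> \<real>"
    have "w i = (rho r p i + S) / (rho r p i - S)" by (rule wz)
    also have "\<dots> \<in> \<real>" using R SR by (intro Reals_divide Reals_add Reals_diff)
    finally have "w i \<in> \<real>" .
    then have "w i / of_real c \<in> \<real>" by (intro Reals_divide) auto
    then have "zeta p ^ i \<in> \<real>" using c0 unfolding w_def by simp
    then have "Im (zeta p ^ i) = 0" by (simp add: complex_is_Real_iff)
    then have "sin (2 * pi * i / p) = 0" unfolding zeta_pow by (simp add: Im_exp)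
    then obtain k :: int where k: "2 * pi * i / p = of_int k * pi" using sin_zero_iff_int2 by blast
    then have "real (2 * i) = of_int k * real p" using p1 by (simp add: field_simps)
    then have "real_of_int (int (2 * i)) = real_of_int (k * int p)" by simp
    then have k2: "int (2 * i) = k * int p" by (rule of_int_eq_iff[THEN iffD1])
    have pp: "int p > 0" using p1 by simp
    have "k \<ge> 0"
    proof (rule ccontr)
      assume "\<not> k \<ge> 0"
      then have "k * int p < 0" using pp by (simp add: mult_neg_pos)
      then show False using k2 by simp
    qed
    moreover have "k < 2"
    proof (rule ccontr)
      assume "\<not> k < 2"
      then have "2 * int p \<le> k * int p" using pp by (simp add: mult_right_mono)
      then show False using k2 ip by linarith
    qed
    moreover have "k \<noteq> 1"
    proof
      assume "k = 1"
      then have "p = 2 * i" using k2 by simp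
      then show False using assms(2) by simp
    qed
    ultimately have "k = 0" by linarith
    then show "i = 0" using k2 by simp
  next
    fix i assume "i < p" "i = 0"
    then have "rho r p i = of_real (s + 2 * s / (c - 1))" using rho_eq unfolding w_def S_def by simp
    then show "rho r p i \<in> \<real>" by simp
  qed
  show ?thesis using P1 P2 P3 P4 P5 by blast
qed

end
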